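(* Let $d\ge2$, $n\ge3$, and let ancillae $A_1,\dots,A_n$ consecutively measure an unprepared quantum system $Q$ (purified by a reference $R$), so that the joint pure state is $$|\Psi'\rangle=\frac{1}{\sqrt d}\sum_{x_1,\dots,x_n}U^{(2)}_{x_1x_2}\cdots U^{(n)}_{x_{n-1}x_n}\,|\widetilde{x}_n\rangle_Q|x_1\rangle_R|x_1\rangle_{A_1}|x_2\rangle_{A_2}\cdots|x_n\rangle_{A_n}.$$ Let $1\le k<m\le n$ with $m-k\ge2$ (three or more consecutive ancillae). Then the reduced density matrix of $A_k,A_{k+1},\dots,A_m$ (obtained by tracing out $Q$, $R$ and all other ancillae) is a classical-quantum state of the form $$\rho(A_k\cdots A_m)=\frac1d\sum_{x_k,x_m}p_{x_kx_m}\,|x_k\rangle\langle x_k|\otimes|\phi_{x_kx_m}\rangle\langle\phi_{x_kx_m}|\otimes|x_m\rangle\langle x_m|,$$ with $p_{x_kx_m}=\sum_{x_{k+1},\dots,x_{m-1}}|U^{(k+1)}_{x_kx_{k+1}}|^2\cdots|U^{(m)}_{x_{m-1}x_m}|^2$ and $|\phi_{x_kx_m}\rangle$ normalized pure states of $A_{k+1}\cdots A_{m-1}$, and its joint entropy is contained only in the first and last devices of the block: $$S(A_k A_{k+1}\cdots A_{m-1}A_m)=S(A_kA_m).$$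
   Context: $Q$ is a $d$-dimensional system that is "unprepared": it is in the maximally mixed state, purified by a reference system $R$ as $|QR\rangle=d^{-1/2}\sum_{x}|\widetilde{x}\rangle|x\rangle$. For each $i$ an orthonormal basis $\{|\widetilde{x}_i\rangle\}_{x_i=1}^d$ of $Q$ is the basis measured by ancilla $A_i$, with $U^{(i)}_{x_{i-1}x_i}=\langle\widetilde{x}_i|\widetilde{x}_{i-1}\rangle$ ($i\ge2$) the entries of a unitary $d\times d$ matrix. Each ancilla $A_i$ is $d$-dimensional with orthonormal basis $\{|x\rangle\}$, starts in a fixed state $|0\rangle$, and measures $Q$ by the unitary $\sum_x|\widetilde{x}_i\rangle\langle\widetilde{x}_i|\otimes U_x$ with $U_x|0\rangle=|x\rangle$, in the order $A_1,A_2,\dots$; writing $R$ in the basis adapted to $A_1$ gives the displayed state. $S$ denotes von Neumann entropy with logarithm base $d$. *)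

theory Defs
  imports Complex_Main "HOL-Library.FuncSet"
begin

(* Computational-basis indices run over 0..d-1. A basis configuration of a set K of
ancillae (labelled 1..n) is an extensional function in K ->E {..<d}.
U i x y (for 2 <= i <= n, x,y < d) is the matrix entry U^(i)_{x y}. *)

definition unitary_mat :: "nat \<Rightarrow> (nat \<Rightarrow> nat \<Rightarrow> complex) \<Rightarrow> bool" where
  "unitary_mat d M \<longleftrightarrow>
     (\<forall>x<d. \<forall>z<d. (\<Sum>y<d. M x y * cnj (M z y)) = (if x = z then 1 else 0)) \<and>
     (\<forall>x<d. \<forall>z<d. (\<Sum>y<d. cnj (M y x) * M y z) = (if x = z then 1 else 0))"

(* Amplitude of the joint pure state |Psi'> on Q (index q, in the basis |x~_n>),
R (index r) and ancillae A_1..A_n (configuration x). *)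
definition amp :: "nat \<Rightarrow> nat \<Rightarrow> (nat \<Rightarrow> nat \<Rightarrow> nat \<Rightarrow> complex) \<Rightarrow> nat \<Rightarrow> nat \<Rightarrow> (nat \<Rightarrow> nat) \<Rightarrow> complex" where
  "amp d n U q r x =
     (if q = x n \<and> r = x 1
      then complex_of_real (1 / sqrt (real d)) * (\<Prod>i\<in>{2..n}. U i (x (i - 1)) (x i))
      else 0)"

definition reduced :: "nat \<Rightarrow> nat \<Rightarrow> (nat \<Rightarrow> nat \<Rightarrow> nat \<Rightarrow> complex) \<Rightarrow> nat set
    \<Rightarrow> (nat \<Rightarrow> nat) \<Rightarrow> (nat \<Rightarrow> nat) \<Rightarrow> complex" where
  "reduced d n U K a b =
     (\<Sum>q<d. \<Sum>r<d. \<Sum>z\<in>({1..n} - K) \<rightarrow>\<^sub>E {..<d}.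
        amp d n U q r (\<lambda>i. if i \<in> K then a i else z i) *
        cnj (amp d n U q r (\<lambda>i. if i \<in> K then b i else z i)))"

definition ent_term :: "real \<Rightarrow> real \<Rightarrow> real" where
  "ent_term base t = (if t = 0 then 0 else t * log base t)"

definition vn_entropy :: "real \<Rightarrow> 'i set \<Rightarrow> ('i \<Rightarrow> 'i \<Rightarrow> complex) \<Rightarrow> real" where
  "vn_entropy base I rho =
     (THE s. \<exists>(e :: 'i \<Rightarrow> 'i \<Rightarrow> complex) (lam :: 'i \<Rightarrow> real).
        (\<forall>i\<in>I. \<forall>j\<in>I. (\<Sum>x\<in>I. e i x * cnj (e j x)) = (if i = j then 1 else 0)) \<and>
        (\<forall>x\<in>I. \<forall>y\<in>I. rho x y = (\<Sum>i\<in>I. complex_of_real (lam i) * e i x * cnj (e i y))) \<and>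
        s = - (\<Sum>i\<in>I. ent_term base (lam i)))"

end

theory Submission
  imports Defs "HOL-Computational_Algebra.Polynomial"
begin


lemma sum_PiE_insert:
  assumes "x \<notin> S"
  shows "(\<Sum>z\<in>Pi\<^sub>E (insert x S) T. f z) = (\<Sum>c\<in>T x. \<Sum>l\<in>Pi\<^sub>E S T. f (l(x := c)))"
proof -
  have "(\<Sum>c\<in>T x. \<Sum>l\<in>Pi\<^sub>E S T. f (l(x := c))) = (\<Sum>p\<in>T x \<times> Pi\<^sub>E S T. f ((snd p)(x := fst p)))"
    by (simp add: sum.cartesian_product case_prod_beta)
  also have "\<dots> = (\<Sum>z\<in>Pi\<^sub>E (insert x S) T. f z)"
  proof (rule sum.reindex_bij_witness[where i="\<lambda>z. (z x, z(x := undefined))" and j="\<lambda>p. (snd p)(x := fst p)"])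
    fix p assume "p \<in> T x \<times> Pi\<^sub>E S T"
    then show "(\<lambda>z. (z x, z(x := undefined))) ((snd p)(x := fst p)) = p"
      using assms by (cases p) (auto simp: PiE_def extensional_def)
  next
    fix p assume "p \<in> T x \<times> Pi\<^sub>E S T"
    then show "(snd p)(x := fst p) \<in> Pi\<^sub>E (insert x S) T"
      using assms by (cases p) (auto simp: PiE_def extensional_def)
  qed (use assms in \<open>auto simp: PiE_def extensional_def Pi_def\<close>)
  finally show ?thesis by simp
qed

lemma sum_PiE_Un:
  assumes "A \<inter> B = {}"
  shows "(\<Sum>z\<in>Pi\<^sub>E (A \<union> B) T. f z) = (\<Sum>x\<in>Pi\<^sub>E A T. \<Sum>y\<in>Pi\<^sub>E B T. f (\<lambda>i. if i \<in> A then x i else y i))"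
proof -
  have "(\<Sum>x\<in>Pi\<^sub>E A T. \<Sum>y\<in>Pi\<^sub>E B T. f (\<lambda>i. if i \<in> A then x i else y i))
       = (\<Sum>p\<in>Pi\<^sub>E A T \<times> Pi\<^sub>E B T. f (\<lambda>i. if i \<in> A then fst p i else snd p i))"
    by (simp add: sum.cartesian_product case_prod_beta)
  also have "\<dots> = (\<Sum>z\<in>Pi\<^sub>E (A \<union> B) T. f z)"
  proof (rule sum.reindex_bij_witness[where i="\<lambda>z. (restrict z A, restrict z B)" and j="\<lambda>p i. if i \<in> A then fst p i else snd p i"])
    fix p assume "p \<in> Pi\<^sub>E A T \<times> Pi\<^sub>E B T"
    then show "(restrict (\<lambda>i. if i \<in> A then fst p i else snd p i) A, restrict (\<lambda>i. if i \<in> A then fst p i else snd p i) B) = p"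
      using assms by (cases p) (auto simp: PiE_def extensional_def restrict_def fun_eq_iff)
  next
    fix p assume "p \<in> Pi\<^sub>E A T \<times> Pi\<^sub>E B T"
    then show "(\<lambda>i. if i \<in> A then fst p i else snd p i) \<in> Pi\<^sub>E (A \<union> B) T"
      using assms by (cases p) (auto simp: PiE_def extensional_def)
  next
    fix z assume "z \<in> Pi\<^sub>E (A \<union> B) T"
    then show "(\<lambda>i. if i \<in> A then fst (restrict z A, restrict z B) i else snd (restrict z A, restrict z B) i) = z"
      by (auto simp: PiE_def extensional_def fun_eq_iff)
  qed auto
  finally show ?thesis by simp
qed

definition ufac :: "(nat \<Rightarrow> nat \<Rightarrow> nat \<Rightarrow> complex) \<Rightarrow> nat \<Rightarrow> (nat \<Rightarrow> nat) \<Rightarrow> (nat \<Rightarrow> nat) \<Rightarrow> complex" where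
  "ufac U i x y = U i (x (i - 1)) (x i) * cnj (U i (y (i - 1)) (y i))"

lemma unitary_col:
  assumes "unitary_mat d M" "a < d" "b < d"
  shows "(\<Sum>c<d. M c a * cnj (M c b)) = (if a = b then 1 else 0)"
proof -
  have "(\<Sum>c<d. cnj (M c a) * M c b) = (if a = b then 1 else 0)"
    using assms unfolding unitary_mat_def by blast
  then have "cnj (\<Sum>c<d. cnj (M c a) * M c b) = (if a = b then 1 else 0)" by simp
  then show ?thesis by (simp add: mult.commute)
qed

lemma unitary_row:
  assumes "unitary_mat d M" "a < d" "b < d"
  shows "(\<Sum>c<d. M a c * cnj (M b c)) = (if a = b then 1 else 0)"
  using assms unfolding unitary_mat_def by blast

lemma left_sum:
  assumes "\<forall>i\<in>{2..k}. unitary_mat d (U i)" "1 \<le> k" "a < d" "b < d"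
  shows "(\<Sum>l\<in>{1..<k} \<rightarrow>\<^sub>E {..<d}. (if (l(k := a)) 1 = (l(k := b)) 1 then 1 else 0) *
            (\<Prod>i\<in>{2..k}. ufac U i (l(k := a)) (l(k := b)))) = (if a = b then 1 else 0)"
  using assms(2,1,3,4)
proof (induction k arbitrary: a b rule: nat_induct_at_least)
  case base
  then show ?case by simp
next
  case (Suc j)
  have ins: "{1..<Suc j} = insert j {1..<j}" using Suc.hyps by auto
  have uj: "unitary_mat d (U (Suc j))" using Suc.prems Suc.hyps by auto
  have IH: "\<And>c. c < d \<Longrightarrow> (\<Sum>l\<in>{Suc 0..<j} \<rightarrow>\<^sub>E {..<d}. (\<Prod>i\<in>{2..j}. ufac U i (l(j := c)) (l(j := c)))) = 1"
  proof -
    fix c :: nat assume c: "c < d"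
    have "\<forall>i\<in>{2..j}. unitary_mat d (U i)" using Suc.prems by auto
    from Suc.IH[OF this c c] show "?thesis c" by (simp add: fun_upd_def)
  qed
  have pr: "{2..Suc j} = insert (Suc j) {2..j}" using Suc.hyps by auto
  have "(\<Sum>l\<in>{1..<Suc j} \<rightarrow>\<^sub>E {..<d}. (if (l(Suc j := a)) 1 = (l(Suc j := b)) 1 then 1 else 0) *
            (\<Prod>i\<in>{2..Suc j}. ufac U i (l(Suc j := a)) (l(Suc j := b))))
     = (\<Sum>c<d. \<Sum>l\<in>{1..<j} \<rightarrow>\<^sub>E {..<d}. (\<Prod>i\<in>{2..j}. ufac U i (l(j := c)) (l(j := c))) *
            (U (Suc j) c a * cnj (U (Suc j) c b)))"
    unfolding ins
  proof (subst sum_PiE_insert, simp, intro sum.cong refl)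
    fix c l assume "c \<in> {..<d}" "l \<in> {1..<j} \<rightarrow>\<^sub>E {..<d}"
    have e1: "(\<Prod>i\<in>{2..j}. ufac U i (l(j := c, Suc j := a)) (l(j := c, Suc j := b)))
        = (\<Prod>i\<in>{2..j}. ufac U i (l(j := c)) (l(j := c)))"
      by (rule prod.cong) (auto simp: ufac_def)
    show "(if (l(j := c, Suc j := a)) 1 = (l(j := c, Suc j := b)) 1 then 1 else 0) *
         (\<Prod>i\<in>{2..Suc j}. ufac U i (l(j := c, Suc j := a)) (l(j := c, Suc j := b))) =
         (\<Prod>i\<in>{2..j}. ufac U i (l(j := c)) (l(j := c))) * (U (Suc j) c a * cnj (U (Suc j) c b))"
      unfolding pr using e1 Suc.hyps by (simp add: ufac_def mult.commute)
  qed
  also have "\<dots> = (\<Sum>c<d. U (Suc j) c a * cnj (U (Suc j) c b))"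
    by (simp add: sum_distrib_right[symmetric] IH)
  also have "\<dots> = (if a = b then 1 else 0)" using unitary_col[OF uj Suc.prems(2,3)] .
  finally show ?case .
qed

lemma right_sum:
  assumes "\<forall>i\<in>{m+1..j}. unitary_mat d (U i)" "m \<le> j" "a < d" "b < d"
  shows "(\<Sum>r\<in>{m<..j} \<rightarrow>\<^sub>E {..<d}. (if (r(m := a)) j = (r(m := b)) j then 1 else 0) *
            (\<Prod>i\<in>{m+1..j}. ufac U i (r(m := a)) (r(m := b)))) = (if a = b then 1 else 0)"
  using assms(2,1,3,4)
proof (induction j rule: nat_induct_at_least)
  case base
  then show ?case by simp
next
  case (Suc j)
  have ins: "{m<..Suc j} = insert (Suc j) {m<..j}" using Suc.hyps by auto
  have uj: "unitary_mat d (U (Suc j))" using Suc.prems Suc.hyps by auto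
  have pr: "{m+1..Suc j} = insert (Suc j) {m+1..j}" using Suc.hyps by auto
  have "(\<Sum>r\<in>{m<..Suc j} \<rightarrow>\<^sub>E {..<d}. (if (r(m := a)) (Suc j) = (r(m := b)) (Suc j) then 1 else 0) *
            (\<Prod>i\<in>{m+1..Suc j}. ufac U i (r(m := a)) (r(m := b))))
     = (\<Sum>c<d. \<Sum>r\<in>{m<..j} \<rightarrow>\<^sub>E {..<d}. (\<Prod>i\<in>{m+1..j}. ufac U i (r(m := a)) (r(m := b))) *
            (U (Suc j) ((r(m := a)) j) c * cnj (U (Suc j) ((r(m := b)) j) c)))"
    unfolding ins
  proof (subst sum_PiE_insert, simp, intro sum.cong refl)
    fix c r assume "c \<in> {..<d}" "r \<in> {m<..j} \<rightarrow>\<^sub>E {..<d}"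
    have e1: "(\<Prod>i\<in>{m+1..j}. ufac U i (r(Suc j := c, m := a)) (r(Suc j := c, m := b)))
        = (\<Prod>i\<in>{m+1..j}. ufac U i (r(m := a)) (r(m := b)))"
      by (rule prod.cong) (auto simp: ufac_def)
    show "(if (r(Suc j := c, m := a)) (Suc j) = (r(Suc j := c, m := b)) (Suc j) then 1 else 0) *
         (\<Prod>i\<in>{m+1..Suc j}. ufac U i (r(Suc j := c, m := a)) (r(Suc j := c, m := b))) =
         (\<Prod>i\<in>{m+1..j}. ufac U i (r(m := a)) (r(m := b))) *
         (U (Suc j) ((r(m := a)) j) c * cnj (U (Suc j) ((r(m := b)) j) c))"
      unfolding pr using e1 Suc.hyps by (simp add: ufac_def mult.commute)
  qed
  also have "\<dots> = (\<Sum>r\<in>{m<..j} \<rightarrow>\<^sub>E {..<d}. (\<Prod>i\<in>{m+1..j}. ufac U i (r(m := a)) (r(m := b))) *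
            (\<Sum>c<d. U (Suc j) ((r(m := a)) j) c * cnj (U (Suc j) ((r(m := b)) j) c)))"
    by (subst sum.swap) (simp add: sum_distrib_left)
  also have "\<dots> = (\<Sum>r\<in>{m<..j} \<rightarrow>\<^sub>E {..<d}. (if (r(m := a)) j = (r(m := b)) j then 1 else 0) *
            (\<Prod>i\<in>{m+1..j}. ufac U i (r(m := a)) (r(m := b))))"
  proof (intro sum.cong refl)
    fix r assume r: "r \<in> {m<..j} \<rightarrow>\<^sub>E {..<d}"
    have "(r(m := a)) j < d" "(r(m := b)) j < d" using r Suc.prems Suc.hyps by (auto simp: PiE_def Pi_def)
    then show "(\<Prod>i\<in>{m+1..j}. ufac U i (r(m := a)) (r(m := b))) *
            (\<Sum>c<d. U (Suc j) ((r(m := a)) j) c * cnj (U (Suc j) ((r(m := b)) j) c)) =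
          (if (r(m := a)) j = (r(m := b)) j then 1 else 0) *
            (\<Prod>i\<in>{m+1..j}. ufac U i (r(m := a)) (r(m := b)))"
      using unitary_row[OF uj] by simp
  qed
  also have "\<dots> = (if a = b then 1 else 0)"
  proof -
    have "\<forall>i\<in>{m+1..j}. unitary_mat d (U i)" using Suc.prems by auto
    from Suc.IH[OF this Suc.prems(2,3)] show ?thesis .
  qed
  finally show ?case .
qed

lemma amp_qr:
  assumes "X n < d" "X 1 < d" "d > 0"
  shows "(\<Sum>q<d. \<Sum>r<d. amp d n U q r X * cnj (amp d n U q r Y)) =
     (if X n = Y n \<and> X 1 = Y 1 then complex_of_real (1 / real d) * (\<Prod>i\<in>{2..n}. ufac U i X Y) else 0)"
proof -
  define V where "V = complex_of_real (1 / real d) * (\<Prod>i\<in>{2..n}. ufac U i X Y)"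
  have c2: "complex_of_real (1 / sqrt (real d)) * cnj (complex_of_real (1 / sqrt (real d))) = complex_of_real (1 / real d)"
    using assms(3) by (simp flip: of_real_mult)
  have V': "V = complex_of_real (1 / sqrt (real d)) * (\<Prod>i\<in>{2..n}. U i (X (i - 1)) (X i)) *
      cnj (complex_of_real (1 / sqrt (real d)) * (\<Prod>i\<in>{2..n}. U i (Y (i - 1)) (Y i)))"
    unfolding V_def c2[symmetric] ufac_def by (simp add: prod.distrib)
  have "\<And>q r. amp d n U q r X * cnj (amp d n U q r Y) =
        (if q = X n then (if r = X 1 then (if X n = Y n \<and> X 1 = Y 1 then V else 0) else 0) else 0)"
    unfolding amp_def V' by auto
  then have "(\<Sum>q<d. \<Sum>r<d. amp d n U q r X * cnj (amp d n U q r Y)) =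
      (\<Sum>q<d. \<Sum>r<d. (if q = X n then (if r = X 1 then (if X n = Y n \<and> X 1 = Y 1 then V else 0) else 0) else 0))"
    by simp
  also have "\<dots> = (if X n = Y n \<and> X 1 = Y 1 then V else 0)"
  proof -
    have gen: "\<And>(a::nat) b (W::complex). a < d \<Longrightarrow> b < d \<Longrightarrow>
       (\<Sum>q<d. \<Sum>r<d. (if q = a then (if r = b then W else 0) else 0)) = W"
    proof -
      fix a b :: nat and W :: complex assume ab: "a < d" "b < d"
      have "\<And>q. (\<Sum>r<d. (if q = a then (if r = b then W else 0) else 0)) = (if q = a then W else 0)"
      proof -
        fix q show "(\<Sum>r<d. (if q = a then (if r = b then W else 0) else 0)) = (if q = a then W else 0)"
          using ab by (cases "q = a") simp_all
      qed
      then show "(\<Sum>q<d. \<Sum>r<d. (if q = a then (if r = b then W else 0) else 0)) = W"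
        using ab by simp
    qed
    show ?thesis using gen[OF assms(1,2)] by simp
  qed
  finally show ?thesis unfolding V_def .
qed

lemma reduced_general:
  assumes U: "\<forall>i\<in>{2..n}. unitary_mat d (U i)" and d: "d > 0"
    and km: "1 \<le> k" "k < m" "m \<le> n" and K: "K \<subseteq> {k..m}" "k \<in> K" "m \<in> K"
    and a: "a \<in> K \<rightarrow>\<^sub>E {..<d}" and b: "b \<in> K \<rightarrow>\<^sub>E {..<d}"
  shows "reduced d n U K a b =
    (if a k = b k \<and> a m = b m then complex_of_real (1 / real d) *
       (\<Sum>w\<in>({k<..<m} - K) \<rightarrow>\<^sub>E {..<d}. \<Prod>i\<in>{k+1..m}.
          ufac U i (\<lambda>i. if i \<in> K then a i else w i) (\<lambda>i. if i \<in> K then b i else w i))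
     else 0)"
proof -
  define L where "L = {1..<k}"
  define M where "M = {k<..<m} - K"
  define R where "R = {m<..n}"
  define XA where "XA z = (\<lambda>i. if i \<in> K then a i else z i)" for z :: "nat \<Rightarrow> nat"
  define XB where "XB z = (\<lambda>i. if i \<in> K then b i else z i)" for z :: "nat \<Rightarrow> nat"
  define c where "c = complex_of_real (1 / real d)"
  define iL where "iL l = (if (l(k := a k)) 1 = (l(k := b k)) 1 then 1 else (0::complex))" for l :: "nat \<Rightarrow> nat"
  define LA where "LA l = (\<Prod>i\<in>{2..k}. ufac U i (l(k := a k)) (l(k := b k)))" for l
  define iR where "iR r = (if (r(m := a m)) n = (r(m := b m)) n then 1 else (0::complex))" for r :: "nat \<Rightarrow> nat"
  define RA where "RA r = (\<Prod>i\<in>{m+1..n}. ufac U i (r(m := a m)) (r(m := b m)))" for r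
  define MA where "MA w = (\<Prod>i\<in>{k+1..m}. ufac U i (XA w) (XB w))" for w
  have ak: "a k < d" "a m < d" "b k < d" "b m < d" using a b K by (auto simp: PiE_def Pi_def)
  have C: "{1..n} - K = L \<union> (M \<union> R)" using K km unfolding L_def M_def R_def
    by auto (metis le_neq_implies_less not_less)+
  have "reduced d n U K a b = (\<Sum>z\<in>({1..n} - K) \<rightarrow>\<^sub>E {..<d}. \<Sum>q<d. \<Sum>r<d.
       amp d n U q r (XA z) * cnj (amp d n U q r (XB z)))"
    unfolding reduced_def XA_def XB_def
    by (subst sum.swap, rule sum.cong, simp, subst sum.swap, simp)
  also have "\<dots> = (\<Sum>z\<in>({1..n} - K) \<rightarrow>\<^sub>E {..<d}.
       (if XA z n = XB z n \<and> XA z 1 = XB z 1 then c * (\<Prod>i\<in>{2..n}. ufac U i (XA z) (XB z)) else 0))"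
  proof (rule sum.cong[OF refl])
    fix z assume z: "z \<in> ({1..n} - K) \<rightarrow>\<^sub>E {..<d}"
    have "XA z n < d" "XA z 1 < d" using z a km unfolding XA_def by (auto simp: PiE_def Pi_def)
    then show "(\<Sum>q<d. \<Sum>r<d. amp d n U q r (XA z) * cnj (amp d n U q r (XB z))) =
       (if XA z n = XB z n \<and> XA z 1 = XB z 1 then c * (\<Prod>i\<in>{2..n}. ufac U i (XA z) (XB z)) else 0)"
      unfolding c_def by (rule amp_qr[OF _ _ d])
  qed
  also have "\<dots> = (\<Sum>l\<in>L \<rightarrow>\<^sub>E {..<d}. \<Sum>w\<in>M \<rightarrow>\<^sub>E {..<d}. \<Sum>r\<in>R \<rightarrow>\<^sub>E {..<d}.
       c * (iL l * LA l) * MA w * (iR r * RA r))"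
  proof -
    have d1: "L \<inter> (M \<union> R) = {}" "M \<inter> R = {}" using km unfolding L_def M_def R_def by auto
    show ?thesis
      unfolding C
    proof (subst sum_PiE_Un[OF d1(1)], rule sum.cong[OF refl], subst sum_PiE_Un[OF d1(2)],
        rule sum.cong[OF refl], rule sum.cong[OF refl])
      fix l w r :: "nat \<Rightarrow> nat"
      define z where "z = (\<lambda>i. if i \<in> L then l i else (\<lambda>i. if i \<in> M then w i else r i) i)"
      have fl: "\<And>j. j \<in> {1..k} \<Longrightarrow> XA z j = (l(k := a k)) j \<and> XB z j = (l(k := b k)) j"
        using K km unfolding XA_def XB_def z_def L_def by auto
      have fm: "\<And>j. j \<in> {k..m} \<Longrightarrow> XA z j = XA w j \<and> XB z j = XB w j"
        using K km unfolding XA_def XB_def z_def L_def M_def by auto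
      have fr: "\<And>j. j \<in> {m..n} \<Longrightarrow> XA z j = (r(m := a m)) j \<and> XB z j = (r(m := b m)) j"
        using K km unfolding XA_def XB_def z_def L_def M_def R_def by auto
      have sp: "{2..n} = {2..k} \<union> ({k+1..m} \<union> {m+1..n})" using km by auto
      have p1: "(\<Prod>i\<in>{2..k}. ufac U i (XA z) (XB z)) = LA l"
        unfolding LA_def
      proof (rule prod.cong[OF refl])
        fix i assume "i \<in> {2..k}"
        then have h: "i - 1 \<in> {1..k}" "i \<in> {1..k}" using km by auto
        show "ufac U i (XA z) (XB z) = ufac U i (l(k := a k)) (l(k := b k))"
          unfolding ufac_def using fl[OF h(1)] fl[OF h(2)] by simp
      qed
      have p2: "(\<Prod>i\<in>{k+1..m}. ufac U i (XA z) (XB z)) = MA w"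
        unfolding MA_def
      proof (rule prod.cong[OF refl])
        fix i assume "i \<in> {k+1..m}"
        then have h: "i - 1 \<in> {k..m}" "i \<in> {k..m}" using km by auto
        show "ufac U i (XA z) (XB z) = ufac U i (XA w) (XB w)"
          unfolding ufac_def using fm[OF h(1)] fm[OF h(2)] by simp
      qed
      have p3: "(\<Prod>i\<in>{m+1..n}. ufac U i (XA z) (XB z)) = RA r"
        unfolding RA_def
      proof (rule prod.cong[OF refl])
        fix i assume "i \<in> {m+1..n}"
        then have h: "i - 1 \<in> {m..n}" "i \<in> {m..n}" using km by auto
        show "ufac U i (XA z) (XB z) = ufac U i (r(m := a m)) (r(m := b m))"
          unfolding ufac_def using fr[OF h(1)] fr[OF h(2)] by simp
      qed
      have pall: "(\<Prod>i\<in>{2..n}. ufac U i (XA z) (XB z)) = LA l * (MA w * RA r)"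
      proof -
        have "(\<Prod>i\<in>{2..n}. ufac U i (XA z) (XB z)) = (\<Prod>i\<in>{2..k}. ufac U i (XA z) (XB z)) *
           ((\<Prod>i\<in>{k+1..m}. ufac U i (XA z) (XB z)) * (\<Prod>i\<in>{m+1..n}. ufac U i (XA z) (XB z)))"
          unfolding sp using km
          by (subst prod.union_disjoint, simp, simp, force, subst prod.union_disjoint, auto)
        then show ?thesis by (simp only: p1 p2 p3)
      qed
      have i1: "(XA z 1 = XB z 1) = ((l(k := a k)) 1 = (l(k := b k)) 1)" using fl[of 1] km by simp
      have i2: "(XA z n = XB z n) = ((r(m := a m)) n = (r(m := b m)) n)" using fr[of n] km by simp
      have "(if XA z n = XB z n \<and> XA z 1 = XB z 1 then c * (\<Prod>i\<in>{2..n}. ufac U i (XA z) (XB z)) else 0) =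
          c * (iL l * LA l) * MA w * (iR r * RA r)"
        unfolding pall i1 i2 iL_def iR_def by simp
      then show "(if XA z n = XB z n \<and> XA z 1 = XB z 1 then c * (\<Prod>i\<in>{2..n}. ufac U i (XA z) (XB z)) else 0) =
          c * (iL l * LA l) * MA w * (iR r * RA r)" .
    qed
  qed
  also have "\<dots> = c * (\<Sum>l\<in>L \<rightarrow>\<^sub>E {..<d}. iL l * LA l) * (\<Sum>w\<in>M \<rightarrow>\<^sub>E {..<d}. MA w) *
      (\<Sum>r\<in>R \<rightarrow>\<^sub>E {..<d}. iR r * RA r)"
  proof -
    define SM where "SM = (\<Sum>w\<in>M \<rightarrow>\<^sub>E {..<d}. MA w)"
    define SR where "SR = (\<Sum>r\<in>R \<rightarrow>\<^sub>E {..<d}. iR r * RA r)"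
    have e1: "\<And>l w. (\<Sum>r\<in>R \<rightarrow>\<^sub>E {..<d}. c * (iL l * LA l) * MA w * (iR r * RA r)) = c * (iL l * LA l) * MA w * SR"
      unfolding SR_def by (simp add: sum_distrib_left)
    have e2: "\<And>l. (\<Sum>w\<in>M \<rightarrow>\<^sub>E {..<d}. c * (iL l * LA l) * MA w * SR) = c * (iL l * LA l) * SM * SR"
      unfolding SM_def by (simp add: sum_distrib_left sum_distrib_right)
    have e3: "(\<Sum>l\<in>L \<rightarrow>\<^sub>E {..<d}. c * (iL l * LA l) * SM * SR) = c * (\<Sum>l\<in>L \<rightarrow>\<^sub>E {..<d}. iL l * LA l) * SM * SR"
      by (simp add: sum_distrib_left sum_distrib_right)
    show ?thesis unfolding e1 e2 e3 SM_def[symmetric] SR_def[symmetric] ..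
  qed
  also have "(\<Sum>l\<in>L \<rightarrow>\<^sub>E {..<d}. iL l * LA l) = (if a k = b k then 1 else 0)"
    unfolding L_def iL_def LA_def using left_sum[of k d U "a k" "b k"] U km ak by auto
  also have "(\<Sum>r\<in>R \<rightarrow>\<^sub>E {..<d}. iR r * RA r) = (if a m = b m then 1 else 0)"
    unfolding R_def iR_def RA_def using right_sum[of m n d U "a m" "b m"] U km ak by auto
  finally show ?thesis unfolding c_def MA_def XA_def XB_def M_def by simp
qed



lemma interp_exists:
  fixes g :: "real \<Rightarrow> real"
  assumes "finite V"
  shows "\<exists>P. \<forall>v\<in>V. poly P v = g v"
  using assms
proof (induction V rule: finite_induct)
  case empty
  then show ?case by simp
next
  case (insert x V)
  then obtain P where P: "\<forall>v\<in>V. poly P v = g v" by blast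
  define Q where "Q = (\<Prod>w\<in>V. [:- w, 1:])"
  have pQ: "\<And>y. poly Q y = (\<Prod>w\<in>V. y - w)" unfolding Q_def by (simp add: poly_prod)
  have Qx: "poly Q x \<noteq> 0" unfolding pQ using insert by auto
  have Qv: "\<And>v. v \<in> V \<Longrightarrow> poly Q v = 0" unfolding pQ using insert by auto
  define P' where "P' = P + smult ((g x - poly P x) / poly Q x) Q"
  have "\<forall>v\<in>insert x V. poly P' v = g v"
    unfolding P'_def using P Qx Qv by auto
  then show ?case by blast
qed

definition decomp :: "'i set \<Rightarrow> ('i \<Rightarrow> 'i \<Rightarrow> complex) \<Rightarrow> ('i \<Rightarrow> 'i \<Rightarrow> complex) \<Rightarrow> ('i \<Rightarrow> real) \<Rightarrow> bool" where
  "decomp I rho e lam \<longleftrightarrow>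
        (\<forall>i\<in>I. \<forall>j\<in>I. (\<Sum>x\<in>I. e i x * cnj (e j x)) = (if i = j then 1 else 0)) \<and>
        (\<forall>x\<in>I. \<forall>y\<in>I. rho x y = (\<Sum>i\<in>I. complex_of_real (lam i) * e i x * cnj (e i y)))"

primrec mp :: "'i set \<Rightarrow> ('i \<Rightarrow> 'i \<Rightarrow> complex) \<Rightarrow> nat \<Rightarrow> 'i \<Rightarrow> 'i \<Rightarrow> complex" where
  "mp I rho 0 = rho"
| "mp I rho (Suc p) = (\<lambda>x y. \<Sum>z\<in>I. mp I rho p x z * rho z y)"

lemma mp_decomp:
  assumes "decomp I rho e lam" "finite I" "x \<in> I" "y \<in> I"
  shows "mp I rho p x y = (\<Sum>i\<in>I. complex_of_real (lam i ^ Suc p) * e i x * cnj (e i y))"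
  using assms(3,4)
proof (induction p arbitrary: y)
  case 0
  then show ?case using assms(1) unfolding decomp_def by simp
next
  case (Suc p)
  have orth: "\<And>i j. i \<in> I \<Longrightarrow> j \<in> I \<Longrightarrow> (\<Sum>z\<in>I. e j z * cnj (e i z)) = (if j = i then 1 else 0)"
    using assms(1) unfolding decomp_def by blast
  have rz: "\<And>z. z \<in> I \<Longrightarrow> rho z y = (\<Sum>j\<in>I. complex_of_real (lam j) * e j z * cnj (e j y))"
    using assms(1) Suc.prems unfolding decomp_def by blast
  have "mp I rho (Suc p) x y = (\<Sum>z\<in>I. (\<Sum>i\<in>I. complex_of_real (lam i ^ Suc p) * e i x * cnj (e i z)) *
        (\<Sum>j\<in>I. complex_of_real (lam j) * e j z * cnj (e j y)))"
    using Suc.IH Suc.prems rz by simp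
  also have "\<dots> = (\<Sum>z\<in>I. \<Sum>i\<in>I. \<Sum>j\<in>I. (complex_of_real (lam i ^ Suc p) * e i x * complex_of_real (lam j) * cnj (e j y)) *
        (e j z * cnj (e i z)))"
    by (rule sum.cong[OF refl], subst sum_product, intro sum.cong refl, simp only: mult_ac)
  also have "\<dots> = (\<Sum>i\<in>I. \<Sum>z\<in>I. \<Sum>j\<in>I. (complex_of_real (lam i ^ Suc p) * e i x * complex_of_real (lam j) * cnj (e j y)) *
        (e j z * cnj (e i z)))"
    by (rule sum.swap)
  also have "\<dots> = (\<Sum>i\<in>I. \<Sum>j\<in>I. \<Sum>z\<in>I. (complex_of_real (lam i ^ Suc p) * e i x * complex_of_real (lam j) * cnj (e j y)) *
        (e j z * cnj (e i z)))"
    by (rule sum.cong[OF refl], rule sum.swap)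
  also have "\<dots> = (\<Sum>i\<in>I. \<Sum>j\<in>I. (complex_of_real (lam i ^ Suc p) * e i x * complex_of_real (lam j) * cnj (e j y)) *
        (\<Sum>z\<in>I. e j z * cnj (e i z)))"
    by (simp only: sum_distrib_left)
  also have "\<dots> = (\<Sum>i\<in>I. \<Sum>j\<in>I. (complex_of_real (lam i ^ Suc p) * e i x * complex_of_real (lam j) * cnj (e j y)) *
        (if j = i then 1 else 0))"
    by (intro sum.cong refl) (simp add: orth)
  also have "\<dots> = (\<Sum>i\<in>I. complex_of_real (lam i ^ Suc (Suc p)) * e i x * cnj (e i y))"
    using assms(2) by (simp add: if_distrib sum.delta' ac_simps cong: if_cong)
  finally show ?case .
qed

lemma power_sums:
  assumes "decomp I rho e lam" "finite I"
  shows "complex_of_real (\<Sum>i\<in>I. lam i ^ Suc p) = (\<Sum>x\<in>I. mp I rho p x x)"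
proof -
  have orth: "\<And>i. i \<in> I \<Longrightarrow> (\<Sum>x\<in>I. e i x * cnj (e i x)) = 1"
    using assms(1) unfolding decomp_def by simp
  have "(\<Sum>x\<in>I. mp I rho p x x) = (\<Sum>x\<in>I. \<Sum>i\<in>I. complex_of_real (lam i ^ Suc p) * (e i x * cnj (e i x)))"
    using mp_decomp[OF assms] by (simp add: ac_simps)
  also have "\<dots> = (\<Sum>i\<in>I. complex_of_real (lam i ^ Suc p) * (\<Sum>x\<in>I. e i x * cnj (e i x)))"
    by (subst sum.swap) (simp only: sum_distrib_left)
  also have "\<dots> = complex_of_real (\<Sum>i\<in>I. lam i ^ Suc p)"
    by (simp add: orth)
  finally show ?thesis by simp
qed

lemma decomp_unique:
  assumes "decomp I rho e lam" "decomp I rho e' mu" "finite I"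
  shows "(\<Sum>i\<in>I. ent_term base (lam i)) = (\<Sum>i\<in>I. ent_term base (mu i))"
proof -
  have ps: "\<And>j. (\<Sum>i\<in>I. lam i ^ j) = (\<Sum>i\<in>I. mu i ^ j)"
  proof -
    fix j show "(\<Sum>i\<in>I. lam i ^ j) = (\<Sum>i\<in>I. mu i ^ j)"
    proof (cases j)
      case 0 then show ?thesis by simp
    next
      case (Suc p)
      have "complex_of_real (\<Sum>i\<in>I. lam i ^ Suc p) = complex_of_real (\<Sum>i\<in>I. mu i ^ Suc p)"
        using power_sums[OF assms(1,3)] power_sums[OF assms(2,3)] by simp
      then show ?thesis using Suc of_real_eq_iff by blast
    qed
  qed
  obtain P where P: "\<forall>v\<in>lam ` I \<union> mu ` I. poly P v = ent_term base v"
    using interp_exists[of "lam ` I \<union> mu ` I" "ent_term base"] assms(3) by blast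
  have pl: "\<And>f. (\<forall>i\<in>I. poly P (f i) = ent_term base (f i)) \<Longrightarrow> (\<Sum>i\<in>I. ent_term base (f i)) = (\<Sum>j\<le>degree P. coeff P j * (\<Sum>i\<in>I. f i ^ j))"
  proof -
    fix f :: "_ \<Rightarrow> real" assume "\<forall>i\<in>I. poly P (f i) = ent_term base (f i)"
    then have "(\<Sum>i\<in>I. ent_term base (f i)) = (\<Sum>i\<in>I. \<Sum>j\<le>degree P. coeff P j * f i ^ j)"
      by (simp add: poly_altdef)
    also have "\<dots> = (\<Sum>j\<le>degree P. coeff P j * (\<Sum>i\<in>I. f i ^ j))"
      by (subst sum.swap) (simp only: sum_distrib_left)
    finally show "(\<Sum>i\<in>I. ent_term base (f i)) = (\<Sum>j\<le>degree P. coeff P j * (\<Sum>i\<in>I. f i ^ j))" .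
  qed
  have "(\<Sum>i\<in>I. ent_term base (lam i)) = (\<Sum>j\<le>degree P. coeff P j * (\<Sum>i\<in>I. lam i ^ j))"
    using pl[of lam] P by auto
  also have "\<dots> = (\<Sum>j\<le>degree P. coeff P j * (\<Sum>i\<in>I. mu i ^ j))" using ps by simp
  also have "\<dots> = (\<Sum>i\<in>I. ent_term base (mu i))"
    using pl[of mu] P by auto
  finally show ?thesis .
qed

lemma vn_entropy_eq:
  assumes "decomp I rho e lam" "finite I"
  shows "vn_entropy base I rho = - (\<Sum>i\<in>I. ent_term base (lam i))"
  unfolding vn_entropy_def
proof (rule the_equality)
  show "\<exists>e lam'. (\<forall>i\<in>I. \<forall>j\<in>I. (\<Sum>x\<in>I. e i x * cnj (e j x)) = (if i = j then 1 else 0)) \<and>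
        (\<forall>x\<in>I. \<forall>y\<in>I. rho x y = (\<Sum>i\<in>I. complex_of_real (lam' i) * e i x * cnj (e i y))) \<and>
        - (\<Sum>i\<in>I. ent_term base (lam i)) = - (\<Sum>i\<in>I. ent_term base (lam' i))"
    using assms(1) unfolding decomp_def by blast
next
  fix s assume "\<exists>e' mu. (\<forall>i\<in>I. \<forall>j\<in>I. (\<Sum>x\<in>I. e' i x * cnj (e' j x)) = (if i = j then 1 else 0)) \<and>
        (\<forall>x\<in>I. \<forall>y\<in>I. rho x y = (\<Sum>i\<in>I. complex_of_real (mu i) * e' i x * cnj (e' i y))) \<and>
        s = - (\<Sum>i\<in>I. ent_term base (mu i))"
  then obtain e' mu where "decomp I rho e' mu" "s = - (\<Sum>i\<in>I. ent_term base (mu i))"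
    unfolding decomp_def by blast
  then show "s = - (\<Sum>i\<in>I. ent_term base (lam i))"
    using decomp_unique[OF assms(1) _ assms(2)] by simp
qed



lemma hh_orth:
  fixes u :: "'a \<Rightarrow> complex" and c :: real
  assumes "finite W" "a \<in> W" "b \<in> W" "c * c * (\<Sum>w\<in>W. (cmod (u w))\<^sup>2) = 2 * c"
  shows "(\<Sum>w\<in>W. ((if w = a then 1 else 0) - of_real c * u w * cnj (u a)) *
                 cnj ((if w = b then 1 else 0) - of_real c * u w * cnj (u b))) = (if a = b then 1 else 0)"
proof -
  define nu where "nu = (\<Sum>w\<in>W. (cmod (u w))\<^sup>2)"
  have nu: "(\<Sum>w\<in>W. u w * cnj (u w)) = of_real nu"
    unfolding nu_def of_real_sum by (rule sum.cong[OF refl]) (rule complex_norm_square[symmetric])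
  have t: "\<And>w. ((if w = a then 1 else 0) - of_real c * u w * cnj (u a)) *
                 cnj ((if w = b then 1 else 0) - of_real c * u w * cnj (u b)) =
         (if w = a then (if w = b then 1 else 0) else 0) - (if w = a then of_real c * cnj (u w) * u b else 0)
         - (if w = b then of_real c * u w * cnj (u a) else 0) + of_real (c * c) * cnj (u a) * u b * (u w * cnj (u w))"
    by (auto simp: algebra_simps)
  have "(\<Sum>w\<in>W. ((if w = a then 1 else 0) - of_real c * u w * cnj (u a)) *
                 cnj ((if w = b then 1 else 0) - of_real c * u w * cnj (u b)))
      = (if a = b then 1 else 0) - of_real c * cnj (u a) * u b - of_real c * u b * cnj (u a)
         + of_real (c * c) * cnj (u a) * u b * of_real nu"
    unfolding t using assms(1-3)
    by (simp add: sum.distrib sum_subtractf sum.delta sum_distrib_left[symmetric] nu)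
  also have "\<dots> = (if a = b then 1 else 0)"
  proof -
    have "of_real (c * c) * of_real nu = (of_real (2 * c) :: complex)"
      using assms(4) unfolding nu_def by (metis of_real_mult)
    then have "of_real (c * c) * cnj (u a) * u b * of_real nu = of_real (2 * c) * cnj (u a) * (u b :: complex)"
      by (metis mult.commute mult.left_commute)
    then show ?thesis by (simp add: algebra_simps)
  qed
  finally show ?thesis .
qed

definition onb :: "'a set \<Rightarrow> ('a \<Rightarrow> 'a \<Rightarrow> complex) \<Rightarrow> bool" where
  "onb W f \<longleftrightarrow> (\<forall>u\<in>W. \<forall>v\<in>W. (\<Sum>w\<in>W. f u w * cnj (f v w)) = (if u = v then 1 else 0))"

lemma hh_exists:
  fixes \<phi> :: "'a \<Rightarrow> complex"
  assumes W: "finite W" "w0 \<in> W" and nrm: "(\<Sum>w\<in>W. (cmod (\<phi> w))\<^sup>2) = 1"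
  shows "\<exists>f. onb W f \<and> f w0 = \<phi>"
proof -
  define r where "r = cmod (\<phi> w0)"
  define \<theta> where "\<theta> = (if \<phi> w0 = 0 then 1 else \<phi> w0 / of_real r)"
  have th1: "\<theta> * cnj \<theta> = 1"
    unfolding \<theta>_def r_def by (auto simp: complex_norm_square[symmetric] power2_eq_square norm_divide)
  have thr: "\<phi> w0 = \<theta> * of_real r"
    unfolding \<theta>_def r_def by auto
  define u where "u w = \<phi> w - (if w = w0 then \<theta> else 0)" for w
  have rest: "(\<Sum>w\<in>W - {w0}. (cmod (\<phi> w))\<^sup>2) = 1 - r\<^sup>2"
    using nrm sum.remove[OF W, of "\<lambda>w. (cmod (\<phi> w))\<^sup>2"] unfolding r_def by simp
  have rle: "r \<le> 1" "r \<ge> 0"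
  proof -
    have "0 \<le> (\<Sum>w\<in>W - {w0}. (cmod (\<phi> w))\<^sup>2)" by (rule sum_nonneg) simp
    then have "r\<^sup>2 \<le> 1" using rest by simp
    then show "r \<le> 1" using power2_le_imp_le[of r 1] by simp
    show "r \<ge> 0" unfolding r_def by simp
  qed
  have uw0: "u w0 = \<theta> * of_real (r - 1)" unfolding u_def using thr by (simp add: algebra_simps)
  have cth: "cmod \<theta> = 1"
  proof -
    have "of_real ((cmod \<theta>)\<^sup>2) = (1::complex)" using th1 complex_norm_square by metis
    then have "(cmod \<theta>)\<^sup>2 = 1" using of_real_eq_1_iff by blast
    then show ?thesis using norm_ge_zero[of \<theta>] by (auto simp: power2_eq_1_iff)
  qed
  have nu: "(\<Sum>w\<in>W. (cmod (u w))\<^sup>2) = 2 - 2 * r"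
  proof -
    have "(\<Sum>w\<in>W. (cmod (u w))\<^sup>2) = (cmod (u w0))\<^sup>2 + (\<Sum>w\<in>W - {w0}. (cmod (u w))\<^sup>2)"
      using sum.remove[OF W] by blast
    also have "(\<Sum>w\<in>W - {w0}. (cmod (u w))\<^sup>2) = (\<Sum>w\<in>W - {w0}. (cmod (\<phi> w))\<^sup>2)"
      by (rule sum.cong) (auto simp: u_def)
    also have "(cmod (u w0))\<^sup>2 = (1 - r)\<^sup>2"
      unfolding uw0 norm_mult cth norm_of_real using rle by (simp add: power2_commute)
    finally show ?thesis using rest by (simp add: power2_eq_square algebra_simps)
  qed
  define c where "c = (if r = 1 then 0 else 1 / (1 - r))"
  have cc: "c * c * (\<Sum>w\<in>W. (cmod (u w))\<^sup>2) = 2 * c"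
  proof (cases "r = 1")
    case True then show ?thesis unfolding nu c_def by simp
  next
    case False
    then have "c * (1 - r) = 1" unfolding c_def by simp
    then have "c * c * (2 - 2 * r) = 2 * c * (c * (1 - r))" by (simp add: algebra_simps)
    then show ?thesis unfolding nu using \<open>c * (1 - r) = 1\<close> by simp
  qed
  define H where "H w v = (if w = v then 1 else 0) - of_real c * u w * cnj (u v)" for w v
  have Hor: "\<And>a b. a \<in> W \<Longrightarrow> b \<in> W \<Longrightarrow> (\<Sum>w\<in>W. H w a * cnj (H w b)) = (if a = b then 1 else 0)"
    unfolding H_def using hh_orth[OF W(1) _ _ cc] by blast
  have key: "\<And>w. w \<in> W \<Longrightarrow> \<phi> w = \<theta> * H w w0"
  proof -
    fix w assume w: "w \<in> W"
    show "\<phi> w = \<theta> * H w w0"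
    proof (cases "r = 1")
      case True
      then have c0: "c = 0" unfolding c_def by simp
      show ?thesis
      proof (cases "w = w0")
        case True then show ?thesis using thr \<open>r = 1\<close> c0 unfolding H_def by simp
      next
        case False
        have "(\<Sum>w\<in>W - {w0}. (cmod (\<phi> w))\<^sup>2) = 0" using rest \<open>r = 1\<close> by simp
        then have "(cmod (\<phi> w))\<^sup>2 = 0" using sum_nonneg_eq_0_iff[of "W - {w0}" "\<lambda>w. (cmod (\<phi> w))\<^sup>2"] W w False by simp
        then show ?thesis using False c0 unfolding H_def by simp
      qed
    next
      case False
      then have c1: "of_real c * of_real (1 - r) = (1::complex)" unfolding c_def
        by (simp flip: of_real_mult)
      have "\<theta> * H w w0 = \<theta> * (if w = w0 then 1 else 0) - of_real c * u w * (\<theta> * cnj \<theta>) * of_real (r - 1)"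
        unfolding H_def uw0 by (simp add: algebra_simps)
      also have "\<dots> = \<theta> * (if w = w0 then 1 else 0) + (of_real c * of_real (1 - r)) * u w"
        unfolding th1 by (simp add: algebra_simps of_real_diff)
      also have "\<dots> = \<phi> w" unfolding c1 u_def by simp
      finally show ?thesis by simp
    qed
  qed
  define f where "f v = (if v = w0 then \<phi> else (\<lambda>w. H w v))" for v
  have "\<forall>a\<in>W. \<forall>b\<in>W. (\<Sum>w\<in>W. f a w * cnj (f b w)) = (if a = b then 1 else 0)"
  proof (intro ballI)
    fix a b assume a: "a \<in> W" and b: "b \<in> W"
    have s1: "(\<Sum>w\<in>W. \<phi> w * cnj (H w b)) = \<theta> * (\<Sum>w\<in>W. H w w0 * cnj (H w b))"
      by (simp add: sum_distrib_left key mult.assoc)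
    have s2: "(\<Sum>w\<in>W. H w a * cnj (\<phi> w)) = cnj \<theta> * (\<Sum>w\<in>W. H w a * cnj (H w w0))"
      by (simp add: sum_distrib_left key mult.assoc mult.left_commute)
    have s3: "(\<Sum>w\<in>W. \<phi> w * cnj (\<phi> w)) = 1"
    proof -
      have "(\<Sum>w\<in>W. \<phi> w * cnj (\<phi> w)) = of_real (\<Sum>w\<in>W. (cmod (\<phi> w))\<^sup>2)"
        unfolding of_real_sum by (rule sum.cong[OF refl]) (rule complex_norm_square[symmetric])
      then show ?thesis using nrm by simp
    qed
    show "(\<Sum>w\<in>W. f a w * cnj (f b w)) = (if a = b then 1 else 0)"
      using Hor[OF a b] Hor[OF W(2) b] Hor[OF a W(2)] s1 s2 s3 unfolding f_def by auto
  qed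
  moreover have "f w0 = \<phi>" unfolding f_def by simp
  ultimately show ?thesis unfolding onb_def by blast
qed


lemma PiE_ext_eq:
  fixes k m :: nat
  assumes "k < m" "i \<in> {k..m} \<rightarrow>\<^sub>E {..<(d::nat)}" "j \<in> {k..m} \<rightarrow>\<^sub>E {..<d}" "i k = j k" "i m = j m"
  shows "(i = j) \<longleftrightarrow> (restrict i {k<..<m} = restrict j {k<..<m})"
proof
  assume "restrict i {k<..<m} = restrict j {k<..<m}"
  then have mid: "\<And>x. x \<in> {k<..<m} \<Longrightarrow> i x = j x" by (metis restrict_apply')
  show "i = j"
  proof
    fix t
    have "t = k \<or> t = m \<or> t \<in> {k<..<m} \<or> t \<notin> {k..m}" by auto
    then consider "t = k" | "t = m" | "t \<in> {k<..<m}" | "t \<notin> {k..m}" by blast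
    then show "i t = j t"
    proof cases
      case 4 then show ?thesis using PiE_arb[OF assms(2), of t] PiE_arb[OF assms(3), of t] by simp
    qed (use assms mid in auto)
  qed
qed simp

lemma bij_fiber:
  fixes h :: "(nat \<Rightarrow> nat) \<Rightarrow> 'b::comm_monoid_add"
  assumes "k < m" "xk < d" "xm < d"
  shows "(\<Sum>x\<in>{k..m} \<rightarrow>\<^sub>E {..<d}. if x k = xk \<and> x m = xm then h (restrict x {k<..<m}) else 0)
       = (\<Sum>w\<in>{k<..<m} \<rightarrow>\<^sub>E {..<d}. h w)"
proof -
  have "(\<Sum>x\<in>{k..m} \<rightarrow>\<^sub>E {..<d}. if x k = xk \<and> x m = xm then h (restrict x {k<..<m}) else 0)
      = (\<Sum>x\<in>{x\<in>{k..m} \<rightarrow>\<^sub>E {..<d}. x k = xk \<and> x m = xm}. h (restrict x {k<..<m}))"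
    by (rule sum.inter_filter[symmetric]) (intro finite_PiE, auto)
  also have "\<dots> = (\<Sum>w\<in>{k<..<m} \<rightarrow>\<^sub>E {..<d}. h w)"
  proof (rule sum.reindex_bij_witness[where i="\<lambda>w. w(k := xk, m := xm)" and j="\<lambda>x. restrict x {k<..<m}"])
    fix w assume "w \<in> {k<..<m} \<rightarrow>\<^sub>E {..<d}"
    then show "restrict (w(k := xk, m := xm)) {k<..<m} = w"
      by (auto simp: PiE_def extensional_def fun_eq_iff)
  next
    fix w assume "w \<in> {k<..<m} \<rightarrow>\<^sub>E {..<d}"
    then show "w(k := xk, m := xm) \<in> {x\<in>{k..m} \<rightarrow>\<^sub>E {..<d}. x k = xk \<and> x m = xm}"
      using assms by (auto simp: PiE_def extensional_def Pi_def)
  next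
    fix x assume x: "x \<in> {x\<in>{k..m} \<rightarrow>\<^sub>E {..<d}. x k = xk \<and> x m = xm}"
    show "(restrict x {k<..<m})(k := xk, m := xm) = x"
    proof
      fix t
      show "((restrict x {k<..<m})(k := xk, m := xm)) t = x t"
        using x assms by (cases "t \<in> {k..m}") (auto simp: PiE_def extensional_def)
    qed
  qed auto
  finally show ?thesis .
qed

lemma bij_base:
  fixes h :: "nat \<Rightarrow> nat \<Rightarrow> 'b::comm_monoid_add" and k m d :: nat
  assumes "k < m" "w0 \<in> {k<..<m} \<rightarrow>\<^sub>E {..<d}"
  shows "(\<Sum>i\<in>{k..m} \<rightarrow>\<^sub>E {..<d}. if restrict i {k<..<m} = w0 then h (i k) (i m) else 0)
       = (\<Sum>j\<in>{k, m} \<rightarrow>\<^sub>E {..<d}. h (j k) (j m))"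
proof -
  have "(\<Sum>i\<in>{k..m} \<rightarrow>\<^sub>E {..<d}. if restrict i {k<..<m} = w0 then h (i k) (i m) else 0)
      = (\<Sum>i\<in>{i\<in>{k..m} \<rightarrow>\<^sub>E {..<d}. restrict i {k<..<m} = w0}. h (i k) (i m))"
    by (rule sum.inter_filter[symmetric]) (intro finite_PiE, auto)
  also have "\<dots> = (\<Sum>j\<in>{k, m} \<rightarrow>\<^sub>E {..<d}. h (j k) (j m))"
  proof (rule sum.reindex_bij_witness[where i="\<lambda>j i. if i \<in> {k<..<m} then w0 i else j i" and j="\<lambda>i. restrict i {k, m}"])
    fix j assume "j \<in> {k, m} \<rightarrow>\<^sub>E {..<d}"
    then show "restrict (\<lambda>i. if i \<in> {k<..<m} then w0 i else j i) {k, m} = j"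
      using assms by (auto simp: PiE_def extensional_def fun_eq_iff)
  next
    fix j assume "j \<in> {k, m} \<rightarrow>\<^sub>E {..<d}"
    then show "(\<lambda>i. if i \<in> {k<..<m} then w0 i else j i) \<in> {i\<in>{k..m} \<rightarrow>\<^sub>E {..<d}. restrict i {k<..<m} = w0}"
      using assms by (auto simp: PiE_def extensional_def Pi_def fun_eq_iff)
  next
    fix i assume "i \<in> {i\<in>{k..m} \<rightarrow>\<^sub>E {..<d}. restrict i {k<..<m} = w0}"
    then have i: "i \<in> {k..m} \<rightarrow>\<^sub>E {..<d}" "restrict i {k<..<m} = w0" by auto
    show "(\<lambda>x. if x \<in> {k<..<m} then w0 x else restrict i {k, m} x) = i"
    proof
      fix t
      show "(if t \<in> {k<..<m} then w0 t else restrict i {k, m} t) = i t"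
        using i assms by (cases "t \<in> {k..m}") (auto simp: PiE_def extensional_def)
    qed
  next
    fix i assume "i \<in> {i\<in>{k..m} \<rightarrow>\<^sub>E {..<d}. restrict i {k<..<m} = w0}"
    then show "restrict i {k, m} \<in> {k, m} \<rightarrow>\<^sub>E {..<d}"
      using assms by (auto simp: PiE_def Pi_def)
  next
    fix i assume "i \<in> {i\<in>{k..m} \<rightarrow>\<^sub>E {..<d}. restrict i {k<..<m} = w0}"
    then show "h (restrict i {k, m} k) (restrict i {k, m} m) = h (i k) (i m)" by simp
  qed
  finally show ?thesis .
qed

theorem theorem2:
  fixes d n k m :: nat and U :: "nat \<Rightarrow> nat \<Rightarrow> nat \<Rightarrow> complex"
  assumes "d \<ge> 2" and "n \<ge> 3"
    and "\<forall>i\<in>{2..n}. unitary_mat d (U i)"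
    and "1 \<le> k" and "k < m" and "m \<le> n" and "m - k \<ge> 2"
  shows "(\<exists>\<phi> :: nat \<Rightarrow> nat \<Rightarrow> (nat \<Rightarrow> nat) \<Rightarrow> complex.
            (\<forall>x<d. \<forall>y<d. (\<Sum>w\<in>{k<..<m} \<rightarrow>\<^sub>E {..<d}. (cmod (\<phi> x y w))\<^sup>2) = 1) \<and>
            (\<forall>a\<in>{k..m} \<rightarrow>\<^sub>E {..<d}. \<forall>b\<in>{k..m} \<rightarrow>\<^sub>E {..<d}.
               reduced d n U {k..m} a b =
                 (if a k = b k \<and> a m = b m
                  then complex_of_real (1 / real d) *
                       complex_of_real
                         (\<Sum>z\<in>{k<..<m} \<rightarrow>\<^sub>E {..<d}.
                            \<Prod>i\<in>{k+1..m}. (cmod (U i ((z(k := a k, m := a m)) (i - 1))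
                                                    ((z(k := a k, m := a m)) i)))\<^sup>2) *
                       \<phi> (a k) (a m) (restrict a {k<..<m}) *
                       cnj (\<phi> (a k) (a m) (restrict b {k<..<m}))
                  else 0))) \<and>
         vn_entropy (real d) ({k..m} \<rightarrow>\<^sub>E {..<d}) (reduced d n U {k..m}) =
         vn_entropy (real d) ({k, m} \<rightarrow>\<^sub>E {..<d}) (reduced d n U {k, m})"
  proof -
  have d0: "d > 0" using assms(1) by simp
  have U: "\<forall>i\<in>{2..n}. unitary_mat d (U i)" using assms(3) .
  have km: "1 \<le> k" "k < m" "m \<le> n" using assms(4,5,6) by auto
  define g where "g x y w = (\<Prod>i\<in>{k+1..m}. U i ((w(k := x, m := y)) (i - 1)) ((w(k := x, m := y)) i))"
    for x y :: nat and w :: "nat \<Rightarrow> nat"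
  define p where "p x y = (\<Sum>z\<in>{k<..<m} \<rightarrow>\<^sub>E {..<d}. \<Prod>i\<in>{k+1..m}.
      (cmod (U i ((z(k := x, m := y)) (i - 1)) ((z(k := x, m := y)) i)))\<^sup>2)" for x y :: nat
  have p_g: "p x y = (\<Sum>w\<in>{k<..<m} \<rightarrow>\<^sub>E {..<d}. (cmod (g x y w))\<^sup>2)" for x y
    unfolding p_def g_def by (simp add: prod_norm[symmetric] prod_power_distrib)
  have p_nn: "p x y \<ge> 0" for x y unfolding p_g by (rule sum_nonneg) simp
  define w0 where "w0 = (\<lambda>i\<in>{k<..<m}. 0::nat)"
  have w0: "w0 \<in> {k<..<m} \<rightarrow>\<^sub>E {..<d}" using d0 unfolding w0_def by auto
  have finW: "finite ({k<..<m} \<rightarrow>\<^sub>E {..<d})" by (intro finite_PiE) auto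
  have finI: "finite ({k..m} \<rightarrow>\<^sub>E {..<d})" by (intro finite_PiE) auto
  have finJ: "finite ({k, m} \<rightarrow>\<^sub>E {..<d})" by (intro finite_PiE) auto
  define \<phi> where "\<phi> x y w = (if p x y = 0 then (if w = w0 then 1 else 0)
      else g x y w / complex_of_real (sqrt (p x y)))" for x y :: nat and w :: "nat \<Rightarrow> nat"
  have g0: "g x y w = 0" if "p x y = 0" "w \<in> {k<..<m} \<rightarrow>\<^sub>E {..<d}" for x y w
  proof -
    have "\<forall>w\<in>{k<..<m} \<rightarrow>\<^sub>E {..<d}. (cmod (g x y w))\<^sup>2 = 0"
      using that(1) unfolding p_g by (subst sum_nonneg_eq_0_iff[symmetric]) (simp_all add: finW)
    then show ?thesis using that(2) by simp
  qed
  have nrm: "(\<Sum>w\<in>{k<..<m} \<rightarrow>\<^sub>E {..<d}. (cmod (\<phi> x y w))\<^sup>2) = 1" for x y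
  proof (cases "p x y = 0")
    case True
    have "(\<Sum>w\<in>{k<..<m} \<rightarrow>\<^sub>E {..<d}. (cmod (\<phi> x y w))\<^sup>2) = (\<Sum>w\<in>{k<..<m} \<rightarrow>\<^sub>E {..<d}. if w = w0 then 1 else 0)"
      unfolding \<phi>_def using True by (intro sum.cong refl) auto
    also have "\<dots> = 1" using w0 finW by simp
    finally show ?thesis .
  next
    case False
    then have pp: "p x y > 0" using p_nn[of x y] by simp
    have "(\<Sum>w\<in>{k<..<m} \<rightarrow>\<^sub>E {..<d}. (cmod (\<phi> x y w))\<^sup>2) = (\<Sum>w\<in>{k<..<m} \<rightarrow>\<^sub>E {..<d}. (cmod (g x y w))\<^sup>2 / p x y)"
      unfolding \<phi>_def using False pp by (intro sum.cong refl) (simp add: norm_divide power_divide)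
    also have "\<dots> = 1" using False unfolding sum_divide_distrib[symmetric] p_g[symmetric] by simp
    finally show ?thesis .
  qed
  have red_big: "reduced d n U {k..m} a b =
       (if a k = b k \<and> a m = b m
        then complex_of_real (1 / real d) * complex_of_real (p (a k) (a m)) *
             \<phi> (a k) (a m) (restrict a {k<..<m}) * cnj (\<phi> (a k) (a m) (restrict b {k<..<m}))
        else 0)"
    if a: "a \<in> {k..m} \<rightarrow>\<^sub>E {..<d}" and b: "b \<in> {k..m} \<rightarrow>\<^sub>E {..<d}" for a b
  proof -
    have RG: "reduced d n U {k..m} a b = (if a k = b k \<and> a m = b m then complex_of_real (1 / real d) *
       (\<Sum>w\<in>({k<..<m} - {k..m}) \<rightarrow>\<^sub>E {..<d}. \<Prod>i\<in>{k+1..m}.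
          ufac U i (\<lambda>i. if i \<in> {k..m} then a i else w i) (\<lambda>i. if i \<in> {k..m} then b i else w i))
     else 0)"
      by (rule reduced_general[OF U d0 km _ _ _ a b]) (use km in auto)
    have emp: "{k<..<m} - {k..m} = {}" by auto
    show ?thesis
    proof (cases "a k = b k \<and> a m = b m")
      case False then show ?thesis by (simp only: RG if_not_P[OF False] if_False)
    next
      case True
      let ?ra = "restrict a {k<..<m}" and ?rb = "restrict b {k<..<m}"
      have ra: "?ra \<in> {k<..<m} \<rightarrow>\<^sub>E {..<d}" "?rb \<in> {k<..<m} \<rightarrow>\<^sub>E {..<d}" using a b by (auto simp: PiE_def Pi_def)
      have fa: "(if j \<in> {k..m} then a j else undefined) = (?ra(k := a k, m := a m)) j"
        "(if j \<in> {k..m} then b j else undefined) = (?rb(k := a k, m := a m)) j"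
        if "j \<in> {k..m}" for j using that True km by auto
      have "(\<Prod>i\<in>{k+1..m}. ufac U i (\<lambda>i. if i \<in> {k..m} then a i else undefined) (\<lambda>i. if i \<in> {k..m} then b i else undefined))
          = (\<Prod>i\<in>{k+1..m}. U i ((?ra(k := a k, m := a m)) (i - 1)) ((?ra(k := a k, m := a m)) i) *
               cnj (U i ((?rb(k := a k, m := a m)) (i - 1)) ((?rb(k := a k, m := a m)) i)))"
      proof (rule prod.cong[OF refl])
        fix i assume "i \<in> {k+1..m}"
        then have h: "i - 1 \<in> {k..m}" "i \<in> {k..m}" by auto
        show "ufac U i (\<lambda>i. if i \<in> {k..m} then a i else undefined) (\<lambda>i. if i \<in> {k..m} then b i else undefined) =
          U i ((?ra(k := a k, m := a m)) (i - 1)) ((?ra(k := a k, m := a m)) i) *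
               cnj (U i ((?rb(k := a k, m := a m)) (i - 1)) ((?rb(k := a k, m := a m)) i))"
          by (simp only: ufac_def fa[OF h(1)] fa[OF h(2)])
      qed
      also have "\<dots> = g (a k) (a m) ?ra * cnj (g (a k) (a m) ?rb)"
        unfolding g_def by (simp add: prod.distrib)
      also have "\<dots> = complex_of_real (p (a k) (a m)) * \<phi> (a k) (a m) ?ra * cnj (\<phi> (a k) (a m) ?rb)"
      proof (cases "p (a k) (a m) = 0")
        case True then show ?thesis using g0[OF True ra(1)] by simp
      next
        case False
        have s: "complex_of_real (sqrt (p (a k) (a m))) * complex_of_real (sqrt (p (a k) (a m))) = complex_of_real (p (a k) (a m))"
          using p_nn[of "a k" "a m"] by (simp flip: of_real_mult)
        have nz: "complex_of_real (sqrt (p (a k) (a m))) \<noteq> 0" using False p_nn[of "a k" "a m"] by simp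
        show ?thesis unfolding \<phi>_def using False nz s[symmetric]
          by (simp add: field_simps)
      qed
      finally have calc: "(\<Prod>i\<in>{k+1..m}. ufac U i (\<lambda>i. if i \<in> {k..m} then a i else undefined) (\<lambda>i. if i \<in> {k..m} then b i else undefined))
        = complex_of_real (p (a k) (a m)) * \<phi> (a k) (a m) ?ra * cnj (\<phi> (a k) (a m) ?rb)" .
      have sing: "(\<Sum>w\<in>({k<..<m} - {k..m}) \<rightarrow>\<^sub>E {..<d}. \<Prod>i\<in>{k+1..m}.
          ufac U i (\<lambda>i. if i \<in> {k..m} then a i else w i) (\<lambda>i. if i \<in> {k..m} then b i else w i))
        = (\<Prod>i\<in>{k+1..m}. ufac U i (\<lambda>i. if i \<in> {k..m} then a i else undefined) (\<lambda>i. if i \<in> {k..m} then b i else undefined))"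
        unfolding emp PiE_empty_domain by simp
      show ?thesis unfolding RG if_P[OF True] sing calc by (simp only: mult.assoc)
    qed
  qed
  have red_small: "reduced d n U {k, m} a b = (if a = b then complex_of_real (p (a k) (a m) / real d) else 0)"
    if a: "a \<in> {k, m} \<rightarrow>\<^sub>E {..<d}" and b: "b \<in> {k, m} \<rightarrow>\<^sub>E {..<d}" for a b
  proof -
    have RG: "reduced d n U {k, m} a b = (if a k = b k \<and> a m = b m then complex_of_real (1 / real d) *
       (\<Sum>w\<in>({k<..<m} - {k, m}) \<rightarrow>\<^sub>E {..<d}. \<Prod>i\<in>{k+1..m}.
          ufac U i (\<lambda>i. if i \<in> {k, m} then a i else w i) (\<lambda>i. if i \<in> {k, m} then b i else w i))
     else 0)"
      by (rule reduced_general[OF U d0 km _ _ _ a b]) (use km in auto)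
    have mset: "{k<..<m} - {k, m} = {k<..<m}" by auto
    have ab: "(a k = b k \<and> a m = b m) = (a = b)"
    proof
      assume "a k = b k \<and> a m = b m"
      then show "a = b"
      proof (intro ext)
        fix t show "a t = b t"
          using \<open>a k = b k \<and> a m = b m\<close> PiE_arb[OF a, of t] PiE_arb[OF b, of t] by (cases "t \<in> {k, m}") auto
      qed
    qed simp
    show ?thesis
    proof (cases "a = b")
      case False then show ?thesis by (simp only: RG ab if_not_P[OF False] if_False)
    next
      case True
      have "(\<Sum>w\<in>({k<..<m} - {k, m}) \<rightarrow>\<^sub>E {..<d}. \<Prod>i\<in>{k+1..m}.
          ufac U i (\<lambda>i. if i \<in> {k, m} then a i else w i) (\<lambda>i. if i \<in> {k, m} then b i else w i))
        = (\<Sum>w\<in>{k<..<m} \<rightarrow>\<^sub>E {..<d}. complex_of_real ((cmod (g (a k) (a m) w))\<^sup>2))"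
        unfolding mset
      proof (rule sum.cong[OF refl])
        fix w assume w: "w \<in> {k<..<m} \<rightarrow>\<^sub>E {..<d}"
        have fa: "(if j \<in> {k, m} then a j else w j) = (w(k := a k, m := a m)) j" if "j \<in> {k..m}" for j
          using that by auto
        have fb: "(if j \<in> {k, m} then b j else w j) = (w(k := a k, m := a m)) j" if "j \<in> {k..m}" for j
          using that True by auto
        have "(\<Prod>i\<in>{k+1..m}. ufac U i (\<lambda>i. if i \<in> {k, m} then a i else w i) (\<lambda>i. if i \<in> {k, m} then b i else w i))
          = (\<Prod>i\<in>{k+1..m}. U i ((w(k := a k, m := a m)) (i - 1)) ((w(k := a k, m := a m)) i) *
               cnj (U i ((w(k := a k, m := a m)) (i - 1)) ((w(k := a k, m := a m)) i)))"
        proof (rule prod.cong[OF refl])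
          fix i assume "i \<in> {k+1..m}"
          then have h: "i - 1 \<in> {k..m}" "i \<in> {k..m}" by auto
          show "ufac U i (\<lambda>i. if i \<in> {k, m} then a i else w i) (\<lambda>i. if i \<in> {k, m} then b i else w i) =
            U i ((w(k := a k, m := a m)) (i - 1)) ((w(k := a k, m := a m)) i) *
               cnj (U i ((w(k := a k, m := a m)) (i - 1)) ((w(k := a k, m := a m)) i))"
            by (simp only: ufac_def fa[OF h(1)] fa[OF h(2)] fb[OF h(1)] fb[OF h(2)])
        qed
        also have "\<dots> = g (a k) (a m) w * cnj (g (a k) (a m) w)"
          unfolding g_def by (simp add: prod.distrib)
        also have "\<dots> = complex_of_real ((cmod (g (a k) (a m) w))\<^sup>2)"
          by (rule complex_norm_square[symmetric])
        finally show "(\<Prod>i\<in>{k+1..m}. ufac U i (\<lambda>i. if i \<in> {k, m} then a i else w i) (\<lambda>i. if i \<in> {k, m} then b i else w i))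
          = complex_of_real ((cmod (g (a k) (a m) w))\<^sup>2)" .
      qed
      also have "\<dots> = complex_of_real (p (a k) (a m))" unfolding p_g of_real_sum ..
      finally have S: "(\<Sum>w\<in>({k<..<m} - {k, m}) \<rightarrow>\<^sub>E {..<d}. \<Prod>i\<in>{k+1..m}.
          ufac U i (\<lambda>i. if i \<in> {k, m} then a i else w i) (\<lambda>i. if i \<in> {k, m} then b i else w i))
          = complex_of_real (p (a k) (a m))" .
      show ?thesis unfolding RG S using True by (simp add: divide_inverse mult.commute)
    qed
  qed
  have decomp_small: "decomp ({k, m} \<rightarrow>\<^sub>E {..<d}) (reduced d n U {k, m})
        (\<lambda>i x. if i = x then 1 else 0) (\<lambda>i. p (i k) (i m) / real d)"
    unfolding decomp_def
  proof (intro conjI ballI)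
    fix i j assume ij: "i \<in> {k, m} \<rightarrow>\<^sub>E {..<d}" "j \<in> {k, m} \<rightarrow>\<^sub>E {..<d}"
    have "\<And>x. (if i = x then 1 else 0) * cnj (if j = x then 1 else (0::complex)) = (if i = x then (if i = j then 1 else 0) else 0)"
      by auto
    then show "(\<Sum>x\<in>{k, m} \<rightarrow>\<^sub>E {..<d}. (if i = x then 1 else 0) * cnj (if j = x then 1 else 0)) = (if i = j then 1 else 0)"
      using finJ ij by simp
  next
    fix x y assume x: "x \<in> {k, m} \<rightarrow>\<^sub>E {..<d}" and y: "y \<in> {k, m} \<rightarrow>\<^sub>E {..<d}"
    have "(\<Sum>i\<in>{k, m} \<rightarrow>\<^sub>E {..<d}. complex_of_real (p (i k) (i m) / real d) * (if i = x then 1 else 0) * cnj (if i = y then 1 else 0))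
        = (\<Sum>i\<in>{k, m} \<rightarrow>\<^sub>E {..<d}. if i = x then (if x = y then complex_of_real (p (x k) (x m) / real d) else 0) else 0)"
      by (intro sum.cong refl) auto
    also have "\<dots> = (if x = y then complex_of_real (p (x k) (x m) / real d) else 0)"
      using x finJ by simp
    finally show "reduced d n U {k, m} x y = (\<Sum>i\<in>{k, m} \<rightarrow>\<^sub>E {..<d}. complex_of_real (p (i k) (i m) / real d) *
        (if i = x then 1 else 0) * cnj (if i = y then 1 else 0))"
      using red_small[OF x y] by simp
  qed
  have ent_small: "vn_entropy (real d) ({k, m} \<rightarrow>\<^sub>E {..<d}) (reduced d n U {k, m})
      = - (\<Sum>j\<in>{k, m} \<rightarrow>\<^sub>E {..<d}. ent_term (real d) (p (j k) (j m) / real d))"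
    by (rule vn_entropy_eq[OF decomp_small finJ])
  have "\<forall>xy. \<exists>f. onb ({k<..<m} \<rightarrow>\<^sub>E {..<d}) f \<and> f w0 = \<phi> (fst xy) (snd xy)"
  proof
    fix xy :: "nat \<times> nat"
    show "\<exists>f. onb ({k<..<m} \<rightarrow>\<^sub>E {..<d}) f \<and> f w0 = \<phi> (fst xy) (snd xy)"
      by (rule hh_exists[OF finW w0 nrm])
  qed
  from choice[OF this] obtain G where G: "\<forall>xy. onb ({k<..<m} \<rightarrow>\<^sub>E {..<d}) (G xy) \<and> G xy w0 = \<phi> (fst xy) (snd xy)"
    by blast
  define F where "F x y = G (x, y)" for x y :: nat
  have Forth: "(\<Sum>w\<in>{k<..<m} \<rightarrow>\<^sub>E {..<d}. F x y u w * cnj (F x y v w)) = (if u = v then 1 else 0)"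
    if "x < d" "y < d" "u \<in> {k<..<m} \<rightarrow>\<^sub>E {..<d}" "v \<in> {k<..<m} \<rightarrow>\<^sub>E {..<d}" for x y u v
  proof -
    have "onb ({k<..<m} \<rightarrow>\<^sub>E {..<d}) (F x y)" using G unfolding F_def by simp
    then show ?thesis using that(3,4) unfolding onb_def by blast
  qed
  have Fw0: "F x y w0 = \<phi> x y" if "x < d" "y < d" for x y
    using G unfolding F_def by simp
  define e where "e i x = (if x k = i k \<and> x m = i m then F (i k) (i m) (restrict i {k<..<m}) (restrict x {k<..<m}) else 0)"
    for i x :: "nat \<Rightarrow> nat"
  define lam where "lam i = (if restrict i {k<..<m} = w0 then p (i k) (i m) / real d else 0)" for i :: "nat \<Rightarrow> nat"
  have inI: "x k < d" "x m < d" "restrict x {k<..<m} \<in> {k<..<m} \<rightarrow>\<^sub>E {..<d}" if "x \<in> {k..m} \<rightarrow>\<^sub>E {..<d}" for x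
    using that km by (auto simp: PiE_def Pi_def)
  have decomp_big: "decomp ({k..m} \<rightarrow>\<^sub>E {..<d}) (reduced d n U {k..m}) e lam"
    unfolding decomp_def
  proof (intro conjI ballI)
    fix i j assume i: "i \<in> {k..m} \<rightarrow>\<^sub>E {..<d}" and j: "j \<in> {k..m} \<rightarrow>\<^sub>E {..<d}"
    show "(\<Sum>x\<in>{k..m} \<rightarrow>\<^sub>E {..<d}. e i x * cnj (e j x)) = (if i = j then 1 else 0)"
    proof (cases "i k = j k \<and> i m = j m")
      case True
      have "(\<Sum>x\<in>{k..m} \<rightarrow>\<^sub>E {..<d}. e i x * cnj (e j x)) =
        (\<Sum>x\<in>{k..m} \<rightarrow>\<^sub>E {..<d}. if x k = i k \<and> x m = i m then
           (\<lambda>w. F (i k) (i m) (restrict i {k<..<m}) w * cnj (F (i k) (i m) (restrict j {k<..<m}) w)) (restrict x {k<..<m}) else 0)"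
        unfolding e_def using True by (intro sum.cong refl) auto
      also have "\<dots> = (\<Sum>w\<in>{k<..<m} \<rightarrow>\<^sub>E {..<d}. F (i k) (i m) (restrict i {k<..<m}) w * cnj (F (i k) (i m) (restrict j {k<..<m}) w))"
        by (rule bij_fiber) (use km inI[OF i] in auto)
      also have "\<dots> = (if restrict i {k<..<m} = restrict j {k<..<m} then 1 else 0)"
        by (rule Forth) (use inI[OF i] inI[OF j] in auto)
      also have "\<dots> = (if i = j then 1 else 0)"
        using PiE_ext_eq[OF km(2) i j] True by simp
      finally show ?thesis .
    next
      case False
      then have "i \<noteq> j" by auto
      moreover have z: "\<And>x. e i x * cnj (e j x) = 0" unfolding e_def using False by auto
      moreover have "(\<Sum>x\<in>{k..m} \<rightarrow>\<^sub>E {..<d}. e i x * cnj (e j x)) = 0"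
        by (rule sum.neutral) (use z in blast)
      ultimately show ?thesis by simp
    qed
  next
    fix x y assume x: "x \<in> {k..m} \<rightarrow>\<^sub>E {..<d}" and y: "y \<in> {k..m} \<rightarrow>\<^sub>E {..<d}"
    define i0 where "i0 = (\<lambda>t. if t \<in> {k<..<m} then w0 t else x t)"
    have w0v: "w0 t = (if t \<in> {k<..<m} then 0 else undefined)" for t unfolding w0_def by simp
    have i01: "i0 \<in> {k..m} \<rightarrow>\<^sub>E {..<d}"
    proof (rule PiE_I)
      fix t assume "t \<in> {k..m}" then show "i0 t \<in> {..<d}"
        using x d0 unfolding i0_def w0v by (auto simp: PiE_def Pi_def)
    next
      fix t assume "t \<notin> {k..m}" then show "i0 t = undefined"
        using x unfolding i0_def by (auto simp: PiE_def extensional_def)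
    qed
    have i02: "restrict i0 {k<..<m} = w0"
    proof
      fix t show "restrict i0 {k<..<m} t = w0 t" unfolding i0_def w0v by simp
    qed
    have i0: "i0 \<in> {k..m} \<rightarrow>\<^sub>E {..<d}" "restrict i0 {k<..<m} = w0" "i0 k = x k" "i0 m = x m"
      using i01 i02 unfolding i0_def by auto
    define V where "V = complex_of_real (p (x k) (x m) / real d) * \<phi> (x k) (x m) (restrict x {k<..<m}) *
       cnj (if y k = x k \<and> y m = x m then \<phi> (x k) (x m) (restrict y {k<..<m}) else 0)"
    have summ: "complex_of_real (lam i) * e i x * cnj (e i y) = (if i = i0 then V else 0)"
      if i: "i \<in> {k..m} \<rightarrow>\<^sub>E {..<d}" for i
    proof (cases "i = i0")
      case True
      show ?thesis unfolding True V_def lam_def e_def using i0 Fw0[OF inI(1,2)[OF x]] by auto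
    next
      case False
      have "lam i = 0 \<or> e i x = 0"
      proof (rule ccontr)
        assume "\<not> (lam i = 0 \<or> e i x = 0)"
        then have "restrict i {k<..<m} = w0" "x k = i k" "x m = i m" unfolding lam_def e_def
          by (auto split: if_splits)
        then have "i = i0" using PiE_ext_eq[OF km(2) i i0(1)] i0 by simp
        then show False using False by simp
      qed
      then show ?thesis using False by auto
    qed
    have "(\<Sum>i\<in>{k..m} \<rightarrow>\<^sub>E {..<d}. complex_of_real (lam i) * e i x * cnj (e i y)) =
        (\<Sum>i\<in>{k..m} \<rightarrow>\<^sub>E {..<d}. if i = i0 then V else 0)"
      by (rule sum.cong[OF refl]) (rule summ)
    also have "\<dots> = V" using i0(1) finI by simp
    also have "\<dots> = reduced d n U {k..m} x y"
      unfolding red_big[OF x y] V_def by (auto simp: divide_inverse mult.commute mult.left_commute)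
    finally show "reduced d n U {k..m} x y = (\<Sum>i\<in>{k..m} \<rightarrow>\<^sub>E {..<d}. complex_of_real (lam i) * e i x * cnj (e i y))"
      by simp
  qed
  have ent_big: "vn_entropy (real d) ({k..m} \<rightarrow>\<^sub>E {..<d}) (reduced d n U {k..m})
      = - (\<Sum>j\<in>{k, m} \<rightarrow>\<^sub>E {..<d}. ent_term (real d) (p (j k) (j m) / real d))"
  proof -
    have "vn_entropy (real d) ({k..m} \<rightarrow>\<^sub>E {..<d}) (reduced d n U {k..m})
        = - (\<Sum>i\<in>{k..m} \<rightarrow>\<^sub>E {..<d}. ent_term (real d) (lam i))"
      by (rule vn_entropy_eq[OF decomp_big finI])
    also have "(\<Sum>i\<in>{k..m} \<rightarrow>\<^sub>E {..<d}. ent_term (real d) (lam i)) =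
        (\<Sum>i\<in>{k..m} \<rightarrow>\<^sub>E {..<d}. if restrict i {k<..<m} = w0 then ent_term (real d) (p (i k) (i m) / real d) else 0)"
      unfolding lam_def by (intro sum.cong refl) (simp add: ent_term_def)
    also have "\<dots> = (\<Sum>j\<in>{k, m} \<rightarrow>\<^sub>E {..<d}. ent_term (real d) (p (j k) (j m) / real d))"
      by (rule bij_base[OF km(2) w0])
    finally show ?thesis .
  qed
  show ?thesis
  proof (intro conjI)
    show "\<exists>\<phi> :: nat \<Rightarrow> nat \<Rightarrow> (nat \<Rightarrow> nat) \<Rightarrow> complex.
            (\<forall>x<d. \<forall>y<d. (\<Sum>w\<in>{k<..<m} \<rightarrow>\<^sub>E {..<d}. (cmod (\<phi> x y w))\<^sup>2) = 1) \<and>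
            (\<forall>a\<in>{k..m} \<rightarrow>\<^sub>E {..<d}. \<forall>b\<in>{k..m} \<rightarrow>\<^sub>E {..<d}.
               reduced d n U {k..m} a b =
                 (if a k = b k \<and> a m = b m
                  then complex_of_real (1 / real d) *
                       complex_of_real
                         (\<Sum>z\<in>{k<..<m} \<rightarrow>\<^sub>E {..<d}.
                            \<Prod>i\<in>{k+1..m}. (cmod (U i ((z(k := a k, m := a m)) (i - 1))
                                                    ((z(k := a k, m := a m)) i)))\<^sup>2) *
                       \<phi> (a k) (a m) (restrict a {k<..<m}) *
                       cnj (\<phi> (a k) (a m) (restrict b {k<..<m}))
                  else 0))"
    proof (rule exI[where x = \<phi>], intro conjI allI impI ballI)
      fix x y :: nat show "(\<Sum>w\<in>{k<..<m} \<rightarrow>\<^sub>E {..<d}. (cmod (\<phi> x y w))\<^sup>2) = 1" by (rule nrm)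
    next
      fix a b assume a: "a \<in> {k..m} \<rightarrow>\<^sub>E {..<d}" and b: "b \<in> {k..m} \<rightarrow>\<^sub>E {..<d}"
      show "reduced d n U {k..m} a b =
                 (if a k = b k \<and> a m = b m
                  then complex_of_real (1 / real d) *
                       complex_of_real
                         (\<Sum>z\<in>{k<..<m} \<rightarrow>\<^sub>E {..<d}.
                            \<Prod>i\<in>{k+1..m}. (cmod (U i ((z(k := a k, m := a m)) (i - 1))
                                                    ((z(k := a k, m := a m)) i)))\<^sup>2) *
                       \<phi> (a k) (a m) (restrict a {k<..<m}) *
                       cnj (\<phi> (a k) (a m) (restrict b {k<..<m}))
                  else 0)"
        using red_big[OF a b] unfolding p_def .
    qed
    show "vn_entropy (real d) ({k..m} \<rightarrow>\<^sub>E {..<d}) (reduced d n U {k..m}) =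
         vn_entropy (real d) ({k, m} \<rightarrow>\<^sub>E {..<d}) (reduced d n U {k, m})"
      by (simp only: ent_big ent_small)
  qed
qed

end
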